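(* Let $x\in(0,1)$ and let $\mu^{(x)}$ be the joint distribution of $(\zeta(x),\zeta(1))$ as in the context. Then the Hausdorff dimension of the measure $\mu^{(x)}$ satisfies $$\dim_{\mathrm{H}}\mu^{(x)}\ge2-\frac{\log(1+x)}{\log2}.$$
   Context: Let $(Q_n)_{n\ge1}$ be i.i.d. random variables taking values $0$ and $1$ with probability $1/2$ each, and independently let $(U_n)_{n\ge1}$ be i.i.d. uniform on $[0,1]$. For $y\in(0,1]$ let $T_n(y)=\sum_{j=1}^n\mathbbm{1}_{\{U_j\le y\}}$ (with $T_0(y)=0$) and $$\zeta(y)=\sum_{n=1}^\infty(1/2)^{T_{n-1}(y)}Q_n\mathbbm{1}_{\{U_n\le y\}}.$$ The Hausdorff dimension of a Borel probability measure $\mu$ on $\mathbb{R}^2$ is $\inf\{\dim_{\mathrm{H}}E: E\text{ Borel},\ \mu(E)=1\}$. *)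

theory Defs
  imports "HOL-Probability.Probability"
begin

definition hcost :: "real \<Rightarrow> 'a::metric_space set \<Rightarrow> real" where
  "hcost s U = (if U = {} then 0 else if s = 0 then 1 else diameter U powr s)"

definition hausdorff_pre :: "real \<Rightarrow> real \<Rightarrow> 'a::metric_space set \<Rightarrow> ennreal" where
  "hausdorff_pre s \<delta> E =
     Inf {(\<Sum>i. ennreal (hcost s (C i))) | C :: nat \<Rightarrow> 'a set.
            (\<forall>i. bounded (C i) \<and> diameter (C i) \<le> \<delta>) \<and> E \<subseteq> (\<Union>i. C i)}"

definition hausdorff_measure :: "real \<Rightarrow> 'a::metric_space set \<Rightarrow> ennreal" where
  "hausdorff_measure s E = (SUP \<delta>\<in>{0<..}. hausdorff_pre s \<delta> E)"

definition hausdorff_dim :: "'a::metric_space set \<Rightarrow> ereal" where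
  "hausdorff_dim E = Inf {ereal s | s. s \<ge> 0 \<and> hausdorff_measure s E = 0}"

definition hausdorff_dim_measure :: "'a::metric_space measure \<Rightarrow> ereal" where
  "hausdorff_dim_measure \<mu> =
     Inf {hausdorff_dim E | E. E \<in> sets borel \<and> emeasure \<mu> E = 1}"

definition Tcount :: "(nat \<Rightarrow> 'a \<Rightarrow> real) \<Rightarrow> nat \<Rightarrow> real \<Rightarrow> 'a \<Rightarrow> nat" where
  "Tcount U n y \<omega> = card {j \<in> {1..n}. U j \<omega> \<le> y}"

definition zeta :: "(nat \<Rightarrow> 'a \<Rightarrow> real) \<Rightarrow> (nat \<Rightarrow> 'a \<Rightarrow> real) \<Rightarrow> real \<Rightarrow> 'a \<Rightarrow> real" where
  "zeta Q U y \<omega> =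
     (\<Sum>m. (let n = Suc m in
            (1/2) ^ Tcount U (n - 1) y \<omega> * Q n \<omega> * (if U n \<omega> \<le> y then 1 else 0)))"

end

theory Submission
  imports Defs
begin


definition TT :: "(nat \<Rightarrow> real) \<Rightarrow> real \<Rightarrow> nat \<Rightarrow> nat" where
  "TT u y m = card {j\<in>{1..m}. u j \<le> y}"

lemma TT_0[simp]: "TT u y 0 = 0"
  by (simp add: TT_def)

lemma TT_Suc: "TT u y (Suc m) = TT u y m + (if u (Suc m) \<le> y then 1 else 0)"
proof -
  have "{j\<in>{1..Suc m}. u j \<le> y} = {j\<in>{1..m}. u j \<le> y} \<union> (if u (Suc m) \<le> y then {Suc m} else {})"
    by (auto simp: le_Suc_eq)
  then show ?thesis by (simp add: TT_def)
qed

lemma TT_mono: "m \<le> m' \<Longrightarrow> TT u y m \<le> TT u y m'"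
  unfolding TT_def by (rule card_mono) auto

definition ee :: "(nat \<Rightarrow> real) \<Rightarrow> real \<Rightarrow> nat \<Rightarrow> real" where
  "ee u y m = (1/2::real)^TT u y m * (if u (Suc m) \<le> y then 1 else 0)"

lemma ee_tele: "n \<le> M \<Longrightarrow> (\<Sum>m\<in>{n..<M}. ee u y m) = 2*(1/2)^TT u y n - 2*(1/2)^TT u y M"
proof (induction M)
  case 0 then show ?case by simp
next
  case (Suc M)
  show ?case
  proof (cases "n \<le> M")
    case True
    then have "(\<Sum>m\<in>{n..<Suc M}. ee u y m) = (\<Sum>m\<in>{n..<M}. ee u y m) + ee u y M" by simp
    also have "\<dots> = 2*(1/2)^TT u y n - 2*(1/2)^TT u y (Suc M)"
      using Suc True by (simp add: ee_def TT_Suc)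
    finally show ?thesis .
  next
    case False then have "n = Suc M" using Suc by simp
    then show ?thesis by simp
  qed
qed

lemma ee_nonneg: "0 \<le> ee u y m" by (simp add: ee_def)

lemma ee_summable: "summable (ee u y)"
proof (rule summableI_nonneg_bounded[where x=2])
  fix n show "0 \<le> ee u y n" by (rule ee_nonneg)
  show "(\<Sum>i<n. ee u y i) \<le> 2"
    using ee_tele[of 0 n u y] by (simp add: atLeast0LessThan)
qed

definition tt :: "(nat \<Rightarrow> real) \<Rightarrow> (nat \<Rightarrow> real) \<Rightarrow> real \<Rightarrow> nat \<Rightarrow> real" where
  "tt q u y m = (1/2::real)^TT u y m * q (Suc m) * (if u (Suc m) \<le> y then 1 else 0)"

definition qok :: "(nat \<Rightarrow> real) \<Rightarrow> bool" where
  "qok q \<longleftrightarrow> (\<forall>n\<ge>1. q n \<in> {0,1})"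

lemma qok_Suc: "qok q \<Longrightarrow> q (Suc m) = 0 \<or> q (Suc m) = 1"
  by (auto simp: qok_def)

lemma tt_nonneg: "qok q \<Longrightarrow> 0 \<le> tt q u y m"
  using qok_Suc[of q m] by (auto simp: tt_def)

lemma tt_le_ee: "qok q \<Longrightarrow> tt q u y m \<le> ee u y m"
  using qok_Suc[of q m] by (auto simp: tt_def ee_def)

lemma tt_summable: "qok q \<Longrightarrow> summable (tt q u y)"
  by (rule summable_comparison_test'[OF ee_summable[of u y], of 0]) (simp add: tt_nonneg tt_le_ee)

lemma zeta_eq: "zeta Q U y \<omega> = suminf (tt (\<lambda>n. Q n \<omega>) (\<lambda>n. U n \<omega>) y)"
  unfolding zeta_def tt_def[abs_def] TT_def Tcount_def Let_def by simp

definition AA :: "(nat \<Rightarrow> real) \<Rightarrow> (nat \<Rightarrow> real) \<Rightarrow> real \<Rightarrow> nat \<Rightarrow> nat \<Rightarrow> real" where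
  "AA q u y k N = (\<Sum>m<N. if TT u y m < k then tt q u y m else 0)"

lemma tail_bound:
  "(\<Sum>m<M. if k \<le> TT u y m then ee u y m else 0) \<le> 2*(1/2)^k - 2*(1/2)^(max k (TT u y M))"
proof (induction M)
  case 0 then show ?case by simp
next
  case (Suc M)
  show ?case
  proof (cases "u (Suc M) \<le> y")
    case sel: True
    show ?thesis
    proof (cases "k \<le> TT u y M")
      case True
      then show ?thesis using Suc sel by (simp add: ee_def TT_Suc max_def)
    next
      case False
      then have "max k (TT u y (Suc M)) = k" "max k (TT u y M) = k" using sel by (auto simp: TT_Suc)
      then show ?thesis using Suc False by simp
    qed
  next
    case False
    then show ?thesis using Suc by (simp add: ee_def TT_Suc max_def split: if_splits)
  qed
qed

lemma zeta_approx:
  assumes q: "qok q" and kN: "k \<le> TT u y N"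
  shows "AA q u y k N \<le> suminf (tt q u y) \<and> suminf (tt q u y) \<le> AA q u y k N + 2*(1/2)^k"
proof -
  define f where "f m = (if TT u y m < k then tt q u y m else 0)" for m
  define g where "g m = (if k \<le> TT u y m then tt q u y m else 0)" for m
  have tt_eq: "tt q u y = (\<lambda>m. f m + g m)" by (auto simp: f_def g_def)
  have sf: "summable f"
    by (rule summable_comparison_test'[OF tt_summable[OF q], of 0]) (auto simp: f_def tt_nonneg[OF q])
  have sg: "summable g"
    by (rule summable_comparison_test'[OF tt_summable[OF q], of 0]) (auto simp: g_def tt_nonneg[OF q])
  have "suminf f = (\<Sum>m<N. f m)"
  proof (rule suminf_finite)
    fix m assume "m \<notin> {..<N}"
    then have "TT u y N \<le> TT u y m" by (intro TT_mono) simp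
    then show "f m = 0" using kN by (simp add: f_def)
  qed simp
  then have sfA: "suminf f = AA q u y k N" by (simp add: AA_def f_def)
  have g0: "0 \<le> suminf g" by (rule suminf_nonneg[OF sg]) (simp add: g_def tt_nonneg[OF q])
  have g1: "suminf g \<le> 2*(1/2)^k"
  proof (rule suminf_le_const[OF sg])
    fix n
    have "(\<Sum>i<n. g i) \<le> (\<Sum>m<n. if k \<le> TT u y m then ee u y m else 0)"
      by (rule sum_mono) (simp add: g_def tt_le_ee[OF q])
    also have "\<dots> \<le> 2*(1/2)^k - 2*(1/2)^(max k (TT u y n))" by (rule tail_bound)
    also have "\<dots> \<le> 2*(1/2)^k" by simp
    finally show "(\<Sum>i<n. g i) \<le> 2*(1/2)^k" .
  qed
  have "suminf (tt q u y) = suminf f + suminf g" unfolding tt_eq by (rule suminf_add[OF sf sg, symmetric])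
  then show ?thesis using sfA g0 g1 by simp
qed

lemma half_pow_mult: "T \<le> j \<Longrightarrow> (1/2::real)^T * 2^j = 2^(j-T)"
proof -
  assume "T \<le> j"
  then have "(2::real)^j = 2^(j-T) * 2^T" by (simp add: power_add[symmetric])
  then show ?thesis by (simp add: power_one_over field_simps)
qed

lemma grid:
  assumes q: "qok q"
  shows "\<exists>z::int. AA q u y k N * 2^k = of_int z"
proof -
  define zi where "zi m = (if TT u y m < k \<and> u (Suc m) \<le> y \<and> q (Suc m) = 1 then (2::int)^(k - TT u y m) else 0)" for m
  have "(if TT u y m < k then tt q u y m else 0) * 2^k = of_int (zi m)" for m
  proof -
    have "q (Suc m) = 0 \<or> q (Suc m) = 1" using q by (auto simp: qok_def)
    then show ?thesis
      by (auto simp: zi_def tt_def half_pow_mult mult.commute[of _ "q _"] mult.assoc)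
  qed
  then have "AA q u y k N * 2^k = of_int (\<Sum>m<N. zi m)"
    by (simp add: AA_def sum_distrib_right)
  then show ?thesis by blast
qed

lemma digit:
  assumes q: "qok q" and n: "n = Suc p" "n \<le> N" and sel: "u n \<le> y" and jk: "TT u y p < k"
  shows "q n = of_int (\<lfloor>AA q u y k N * 2^(TT u y p)\<rfloor> mod 2)"
proof -
  define j where "j = TT u y p"
  define g where "g m = (if TT u y m < k then tt q u y m else 0) * 2^j" for m
  have TTn: "TT u y n = Suc j" using sel n by (simp add: TT_Suc j_def)
  have split: "{..<N} = {..<p} \<union> {p} \<union> {Suc p..<N}" using n by auto
  have "AA q u y k N * 2^j = (\<Sum>m<N. g m)" by (simp add: AA_def g_def sum_distrib_right)
  also have "\<dots> = (\<Sum>m<p. g m) + g p + (\<Sum>m\<in>{Suc p..<N}. g m)"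
    unfolding split by (subst sum.union_disjoint, auto)+
  finally have decomp: "AA q u y k N * 2^j = (\<Sum>m<p. g m) + g p + (\<Sum>m\<in>{Suc p..<N}. g m)" .
  define zi where "zi m = (if TT u y m < k \<and> u (Suc m) \<le> y \<and> q (Suc m) = 1 then (2::int)^(j - Suc (TT u y m)) else 0)" for m
  have gz: "g m = 2 * of_int (zi m)" if "m < p" for m
  proof (cases "u (Suc m) \<le> y")
    case True
    have "TT u y (Suc m) \<le> TT u y p" using that by (intro TT_mono) simp
    then have lt: "Suc (TT u y m) \<le> j" using True by (simp add: TT_Suc j_def)
    have "(1/2::real)^TT u y m * 2^j = 2 * 2^(j - Suc (TT u y m))"
      using half_pow_mult[of "TT u y m" j] lt by (simp add: Suc_diff_Suc[symmetric])
    then show ?thesis using True qok_Suc[OF q, of m]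
      by (auto simp: g_def zi_def tt_def mult.commute[of _ "q _"] mult.assoc)
  next
    case False then show ?thesis by (simp add: g_def zi_def tt_def)
  qed
  have s1: "(\<Sum>m<p. g m) = 2 * of_int (\<Sum>m<p. zi m)"
    by (simp add: gz sum_distrib_left)
  have s2: "g p = q n" using sel jk n by (simp add: g_def tt_def j_def power_one_over field_simps)
  have r0: "0 \<le> (\<Sum>m\<in>{Suc p..<N}. g m)"
    by (rule sum_nonneg) (simp add: g_def tt_nonneg[OF q])
  have "(\<Sum>m\<in>{Suc p..<N}. g m) \<le> (\<Sum>m\<in>{Suc p..<N}. ee u y m * 2^j)"
    by (rule sum_mono) (simp add: g_def tt_le_ee[OF q] tt_nonneg[OF q] ee_nonneg)
  also have "\<dots> = (2*(1/2)^TT u y n - 2*(1/2)^TT u y N) * 2^j"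
    using ee_tele[of n N u y] n by (simp add: sum_distrib_right[symmetric])
  also have "\<dots> < 1"
  proof -
    have "(1/2::real)^Suc j * 2^j = 1/2" by (simp add: power_one_over field_simps)
    moreover have "0 < (1/2::real)^TT u y N * 2^j" by simp
    ultimately show ?thesis using TTn by (simp add: algebra_simps)
  qed
  finally have r1: "(\<Sum>m\<in>{Suc p..<N}. g m) < 1" .
  define qi where "qi = (if q n = 1 then 1 else 0::int)"
  have qqi: "q n = of_int qi" using qok_Suc[OF q, of p] n by (auto simp: qi_def)
  define r where "r = (\<Sum>m\<in>{Suc p..<N}. g m)"
  have "AA q u y k N * 2^j = r + of_int (2 * (\<Sum>m<p. zi m) + qi)"
    using decomp s1 s2 qqi by (simp add: r_def)
  then have "\<lfloor>AA q u y k N * 2^j\<rfloor> = \<lfloor>r\<rfloor> + (2 * (\<Sum>m<p. zi m) + qi)"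
    by (simp add: floor_add_int)
  also have "\<lfloor>r\<rfloor> = 0" using r0 r1 by (simp add: r_def floor_eq_iff)
  finally have "\<lfloor>AA q u y k N * 2^j\<rfloor> mod 2 = qi" by (simp add: qi_def)
  then show ?thesis using qqi by (simp add: j_def)
qed




definition wB :: "real \<Rightarrow> nat \<Rightarrow> nat set \<Rightarrow> real" where
  "wB x N B = (\<Prod>n\<in>B. x) * (\<Prod>n\<in>{1..N}-B. 1 - x)"

lemma wB_nonneg: "0 \<le> x \<Longrightarrow> x \<le> 1 \<Longrightarrow> 0 \<le> wB x N B"
  by (simp add: wB_def prod_nonneg)

lemma prod_if_card:
  assumes "finite B"
  shows "(\<Prod>n\<in>B. if P n then (c::real) else 1) = c ^ card {n\<in>B. P n}"
proof -
  have "(\<Prod>n\<in>B. if P n then c else 1) = (\<Prod>n\<in>{n\<in>B. P n}. c)"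
    using assms by (simp add: prod.If_cases Int_def)
  then show ?thesis by simp
qed

lemma sumA:
  assumes "k \<le> N"
  shows "(\<Sum>B\<in>Pow {1..N}. wB x N B * (1/2::real)^(2*k - card (B \<inter> {1..k}))) = ((1+x)/4)^k"
proof -
  have eq: "wB x N B * (1/2::real)^(2*k - card (B \<inter> {1..k}))
      = (1/4)^k * ((\<Prod>n\<in>B. x * (if n \<le> k then 2 else 1)) * (\<Prod>n\<in>{1..N}-B. 1 - x))"
    if B: "B \<in> Pow {1..N}" for B
  proof -
    have fin: "finite B" using B finite_subset by auto
    have cB: "card (B \<inter> {1..k}) \<le> k"
      using card_mono[of "{1..k}" "B \<inter> {1..k}"] by auto
    have set: "{n\<in>B. n \<le> k} = B \<inter> {1..k}" using B by auto
    have "(\<Prod>n\<in>B. x * (if n \<le> k then 2 else 1)) = (\<Prod>n\<in>B. x) * 2 ^ card (B \<inter> {1..k})"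
      using prod_if_card[OF fin, of "\<lambda>n. n \<le> k" 2] set by (simp add: prod.distrib)
    moreover have "(1/2::real)^(2*k - card (B \<inter> {1..k})) = (1/4)^k * 2 ^ card (B \<inter> {1..k})"
    proof -
      have "(2::real)^(2*k) = 2^(2*k - card (B \<inter> {1..k})) * 2^card (B \<inter> {1..k})"
        using cB by (simp add: power_add[symmetric])
      moreover have "(2::real)^(2*k) = 4^k" by (simp add: power_mult)
      ultimately show ?thesis by (simp add: power_one_over field_simps)
    qed
    ultimately show ?thesis by (simp add: wB_def)
  qed
  have "(\<Sum>B\<in>Pow {1..N}. wB x N B * (1/2::real)^(2*k - card (B \<inter> {1..k})))
     = (1/4)^k * (\<Sum>B\<in>Pow {1..N}. (\<Prod>n\<in>B. x * (if n \<le> k then 2 else 1)) * (\<Prod>n\<in>{1..N}-B. 1 - x))"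
    unfolding sum_distrib_left by (rule sum.cong[OF refl]) (rule eq)
  also have "(\<Sum>B\<in>Pow {1..N}. (\<Prod>n\<in>B. x * (if n \<le> k then 2 else 1)) * (\<Prod>n\<in>{1..N}-B. 1 - x))
      = (\<Prod>n\<in>{1..N}. x * (if n \<le> k then 2 else 1) + (1 - x))"
    by (rule prod_add[symmetric]) simp
  also have "\<dots> = (\<Prod>n\<in>{1..N}. if n \<le> k then 1 + x else 1)"
    by (rule prod.cong) auto
  also have "\<dots> = (1+x)^card {n\<in>{1..N}. n \<le> k}" by (rule prod_if_card) simp
  also have "{n\<in>{1..N}. n \<le> k} = {1..k}" using assms by auto
  finally show ?thesis by (simp add: power_divide)
qed

lemma sumB:
  assumes "k \<le> N" "0 \<le> x" "x \<le> 1"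
  shows "(\<Sum>B\<in>Pow {1..N}. wB x N B * (if card B < k then 1 else 0)) \<le> 2^k * (1 - x/2)^(N-k)"
proof -
  have le: "wB x N B * (if card B < k then 1 else 0)
      \<le> 2^k * ((\<Prod>n\<in>B. x * (if k < n then 1/2 else 1)) * (\<Prod>n\<in>{1..N}-B. 1 - x))"
    if B: "B \<in> Pow {1..N}" for B
  proof -
    have fin: "finite B" using B finite_subset by auto
    have "(\<Prod>n\<in>B. x * (if k < n then 1/2 else 1)) = (\<Prod>n\<in>B. x) * (1/2) ^ card {n\<in>B. k < n}"
      using prod_if_card[OF fin, of "\<lambda>n. k < n" "1/2"] by (simp add: prod.distrib)
    moreover have "(if card B < k then 1 else 0) \<le> 2^k * (1/2::real) ^ card {n\<in>B. k < n}"
    proof (cases "card B < k")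
      case True
      have "card {n\<in>B. k < n} \<le> card B" using fin by (intro card_mono) auto
      then have "card {n\<in>B. k < n} \<le> k" using True by simp
      then have "(1/2::real)^k \<le> (1/2) ^ card {n\<in>B. k < n}" by (rule power_decreasing) auto
      then have "2^k * (1/2::real)^k \<le> 2^k * (1/2) ^ card {n\<in>B. k < n}" by simp
      then show ?thesis using True by (simp add: power_one_over)
    qed simp
    moreover have "0 \<le> wB x N B" using assms by (simp add: wB_nonneg)
    ultimately show ?thesis using assms
    proof -
      assume e: "(\<Prod>n\<in>B. x * (if k < n then 1/2 else 1)) = (\<Prod>n\<in>B. x) * (1/2) ^ card {n\<in>B. k < n}"
        and i: "(if card B < k then 1 else 0) \<le> 2^k * (1/2::real) ^ card {n\<in>B. k < n}"
        and w: "0 \<le> wB x N B"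
      have "wB x N B * (if card B < k then 1 else 0) \<le> wB x N B * (2^k * (1/2::real) ^ card {n\<in>B. k < n})"
        by (rule mult_left_mono[OF i w])
      also have "\<dots> = 2^k * ((\<Prod>n\<in>B. x * (if k < n then 1/2 else 1)) * (\<Prod>n\<in>{1..N}-B. 1 - x))"
        unfolding e wB_def by (simp add: ac_simps)
      finally show ?thesis .
    qed
  qed
  have "(\<Sum>B\<in>Pow {1..N}. wB x N B * (if card B < k then 1 else 0))
     \<le> (\<Sum>B\<in>Pow {1..N}. 2^k * ((\<Prod>n\<in>B. x * (if k < n then 1/2 else 1)) * (\<Prod>n\<in>{1..N}-B. 1 - x)))"
    by (rule sum_mono) (rule le)
  also have "\<dots> = 2^k * (\<Sum>B\<in>Pow {1..N}. (\<Prod>n\<in>B. x * (if k < n then 1/2 else 1)) * (\<Prod>n\<in>{1..N}-B. 1 - x))"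
    by (simp add: sum_distrib_left)
  also have "(\<Sum>B\<in>Pow {1..N}. (\<Prod>n\<in>B. x * (if k < n then 1/2 else 1)) * (\<Prod>n\<in>{1..N}-B. 1 - x))
      = (\<Prod>n\<in>{1..N}. x * (if k < n then 1/2 else 1) + (1 - x))"
    by (rule prod_add[symmetric]) simp
  also have "\<dots> = (\<Prod>n\<in>{1..N}. if k < n then 1 - x/2 else 1)"
    by (rule prod.cong) auto
  also have "\<dots> = (1 - x/2)^card {n\<in>{1..N}. k < n}" by (rule prod_if_card) simp
  also have "{n\<in>{1..N}. k < n} = {k<..N}" using assms by auto
  finally show ?thesis by simp
qed




locale zsetup = prob_space M for M :: "'a measure" +
  fixes Q U :: "nat \<Rightarrow> 'a \<Rightarrow> real" and x :: real
  assumes indep: "indep_vars (\<lambda>_. borel)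
                  (\<lambda>i. case i of Inl n \<Rightarrow> Q n | Inr n \<Rightarrow> U n)
                  (Inl ` {1..} \<union> Inr ` {1..})"
    and Q_vals: "\<And>n \<omega>. n \<ge> 1 \<Longrightarrow> \<omega> \<in> space M \<Longrightarrow> Q n \<omega> \<in> {0, 1}"
    and Q_half: "\<And>n. n \<ge> 1 \<Longrightarrow> measure M {\<omega> \<in> space M. Q n \<omega> = 1} = 1/2"
    and U_unif: "\<And>n. n \<ge> 1 \<Longrightarrow> distr M lborel (U n) = uniform_measure lborel {0..1}"
    and x: "0 < x" "x < 1"
begin

abbreviation "XX \<equiv> (\<lambda>i. case i of Inl n \<Rightarrow> Q n | Inr n \<Rightarrow> U n)"

lemma Q_meas: "n \<ge> 1 \<Longrightarrow> Q n \<in> borel_measurable M"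
  using indep unfolding indep_vars_def2 by (auto dest: bspec[of _ _ "Inl n"])

lemma U_meas: "n \<ge> 1 \<Longrightarrow> U n \<in> borel_measurable M"
  using indep unfolding indep_vars_def2 by (auto dest: bspec[of _ _ "Inr n"])

lemma U_prob: assumes "n \<ge> 1" and that: "S \<in> sets borel" shows "prob (U n -` S \<inter> space M) = measure lborel ({0..1} \<inter> S)"
proof -
  have m: "U n \<in> measurable M lborel" using U_meas[OF assms(1)] by simp
  have "prob (U n -` S \<inter> space M) = measure (distr M lborel (U n)) S"
    using that m by (simp add: measure_distr)
  also have "\<dots> = measure (uniform_measure lborel {0..1}) S" using U_unif[OF assms(1)] by simp
  also have "\<dots> = measure lborel ({0..1} \<inter> S) / measure lborel {0..1::real}"
    using that by (subst measure_uniform_measure) auto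
  finally show ?thesis by simp
qed

lemma U_le: "n \<ge> 1 \<Longrightarrow> prob (U n -` {..x} \<inter> space M) = x"
  using U_prob[of n "{..x}"] x by simp

lemma U_gt: "n \<ge> 1 \<Longrightarrow> prob (U n -` {x<..} \<inter> space M) = 1 - x"
proof -
  assume n: "n \<ge> 1"
  have "{0..1} \<inter> {x<..} = {x<..1::real}" using x by auto
  then show ?thesis using U_prob[OF n, of "{x<..}"] x by simp
qed

lemma U_gt1: "n \<ge> 1 \<Longrightarrow> prob (U n -` {1<..} \<inter> space M) = 0"
proof -
  assume n: "n \<ge> 1"
  have "{0..1} \<inter> {1<..} = ({}::real set)" by auto
  then show ?thesis using U_prob[OF n, of "{1<..}"] by simp
qed

lemma Q_le_half: assumes n: "n \<ge> 1" shows "prob (Q n -` {c} \<inter> space M) \<le> 1/2"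
proof -
  have ev: "Q n -` {c} \<inter> space M \<in> events" using Q_meas[OF n] by measurable
  have ev1: "{\<omega> \<in> space M. Q n \<omega> = 1} \<in> events" using Q_meas[OF n] by measurable
  consider "c = 1" | "c = 0" | "c \<noteq> 0 \<and> c \<noteq> 1" by blast
  then show ?thesis
  proof cases
    case 1
    then have "Q n -` {c} \<inter> space M = {\<omega> \<in> space M. Q n \<omega> = 1}" by auto
    then show ?thesis using Q_half[OF n] by simp
  next
    case 2
    then have "Q n -` {c} \<inter> space M = space M - {\<omega> \<in> space M. Q n \<omega> = 1}"
      using Q_vals[OF n] by auto
    then show ?thesis using Q_half[OF n] prob_compl[OF ev1] by simp
  next
    case 3
    then have "Q n -` {c} \<inter> space M = {}" using Q_vals[OF n] by auto
    then show ?thesis by simp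
  qed
qed

lemma cyl_prob:
  assumes F: "finite F" "F \<subseteq> {1..}" and B: "B \<subseteq> {1..N}" and N: "1 \<le> N"
  shows "prob {\<omega>\<in>space M. (\<forall>n\<in>{1..N}. (U n \<omega> \<le> x) = (n\<in>B)) \<and> (\<forall>n\<in>F. Q n \<omega> = c n)}
         \<le> wB x N B * (1/2)^card F"
proof -
  define J where "J = Inl ` F \<union> Inr ` {1..N}"
  define A where "A = (\<lambda>i. case i of Inl n \<Rightarrow> Q n -` {c n} \<inter> space M
                        | Inr n \<Rightarrow> U n -` (if n \<in> B then {..x} else {x<..}) \<inter> space M)"
  have ind: "indep_sets (\<lambda>i. {XX i -` S \<inter> space M | S. S \<in> sets borel}) (Inl ` {1..} \<union> Inr ` {1..})"
    using indep unfolding indep_vars_def2 by simp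
  have JI: "J \<subseteq> Inl ` {1..} \<union> Inr ` {1..}" using F by (auto simp: J_def)
  have Jne: "J \<noteq> {}" using N by (auto simp: J_def)
  have Jfin: "finite J" using F by (simp add: J_def)
  have AJ: "A \<in> Pi J (\<lambda>i. {XX i -` S \<inter> space M | S. S \<in> sets borel})"
    by (auto simp: J_def A_def)
  have prodJ: "prob (\<Inter>j\<in>J. A j) = (\<Prod>j\<in>J. prob (A j))"
    using ind JI Jne Jfin AJ unfolding indep_sets_def by blast
  have evt: "{\<omega>\<in>space M. (\<forall>n\<in>{1..N}. (U n \<omega> \<le> x) = (n\<in>B)) \<and> (\<forall>n\<in>F. Q n \<omega> = c n)} = (\<Inter>j\<in>J. A j)"
  proof -
    have "Inr 1 \<in> J" using N by (simp add: J_def)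
    then have sub: "(\<Inter>j\<in>J. A j) \<subseteq> space M" by (auto simp: A_def)
    show ?thesis
    proof (intro equalityI subsetI)
      fix \<omega> assume "\<omega> \<in> {\<omega>\<in>space M. (\<forall>n\<in>{1..N}. (U n \<omega> \<le> x) = (n\<in>B)) \<and> (\<forall>n\<in>F. Q n \<omega> = c n)}"
      then show "\<omega> \<in> (\<Inter>j\<in>J. A j)" by (auto simp: J_def A_def not_le)
    next
      fix \<omega> assume w: "\<omega> \<in> (\<Inter>j\<in>J. A j)"
      then have "\<omega> \<in> space M" using sub by auto
      moreover have "(U n \<omega> \<le> x) = (n\<in>B)" if "n \<in> {1..N}" for n
        using w that by (auto simp: J_def A_def split: if_splits dest!: bspec[of _ _ "Inr n"])
      moreover have "Q n \<omega> = c n" if "n \<in> F" for n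
        using w that by (auto simp: J_def A_def dest!: bspec[of _ _ "Inl n"])
      ultimately show "\<omega> \<in> {\<omega>\<in>space M. (\<forall>n\<in>{1..N}. (U n \<omega> \<le> x) = (n\<in>B)) \<and> (\<forall>n\<in>F. Q n \<omega> = c n)}"
        by auto
    qed
  qed
  have "(\<Prod>j\<in>J. prob (A j)) = (\<Prod>j\<in>Inl ` F. prob (A j)) * (\<Prod>j\<in>Inr ` {1..N}. prob (A j))"
    unfolding J_def using F by (intro prod.union_disjoint) auto
  also have "(\<Prod>j\<in>Inl ` F. prob (A j)) = (\<Prod>n\<in>F. prob (Q n -` {c n} \<inter> space M))"
    by (subst prod.reindex) (auto simp: A_def inj_on_def)
  also have "(\<Prod>j\<in>Inr ` {1..N}. prob (A j)) = (\<Prod>n\<in>{1..N}. if n \<in> B then x else 1 - x)"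
    by (subst prod.reindex) (auto simp: A_def inj_on_def U_le U_gt intro!: prod.cong)
  also have "(\<Prod>n\<in>{1..N}. if n \<in> B then x else 1 - x) = wB x N B"
  proof -
    have "{1..N} \<inter> {n. n \<in> B} = B" "{1..N} \<inter> - {n. n \<in> B} = {1..N} - B" using B by auto
    then show ?thesis by (simp add: prod.If_cases wB_def del: prod_constant)
  qed
  finally have eq: "prob (\<Inter>j\<in>J. A j) = (\<Prod>n\<in>F. prob (Q n -` {c n} \<inter> space M)) * wB x N B"
    using prodJ by simp
  have "(\<Prod>n\<in>F. prob (Q n -` {c n} \<inter> space M)) \<le> (\<Prod>n\<in>F. 1/2)"
  proof (rule prod_mono)
    fix n assume "n \<in> F"
    then have "n \<ge> 1" using F by auto
    then show "0 \<le> prob (Q n -` {c n} \<inter> space M) \<and> prob (Q n -` {c n} \<inter> space M) \<le> 1/2"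
      using Q_le_half by simp
  qed
  then have "(\<Prod>n\<in>F. prob (Q n -` {c n} \<inter> space M)) * wB x N B \<le> (1/2)^card F * wB x N B"
    using wB_nonneg[of x N B] x by (intro mult_right_mono) auto
  then show ?thesis using eq evt by (simp add: mult.commute)
qed

end



lemma cardS_aux:
  fixes B :: "nat set"
  shows "card {n\<in>B \<inter> {1..m}. card (B \<inter> {1..n-1}) < k} = min k (card (B \<inter> {1..m}))"
proof (induction m)
  case 0 then show ?case by simp
next
  case (Suc m)
  have e1: "{n\<in>B \<inter> {1..Suc m}. card (B \<inter> {1..n-1}) < k}
      = {n\<in>B \<inter> {1..m}. card (B \<inter> {1..n-1}) < k} \<union> (if Suc m \<in> B \<and> card (B \<inter> {1..m}) < k then {Suc m} else {})"
    by (auto simp: le_Suc_eq)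
  have e2: "B \<inter> {1..Suc m} = B \<inter> {1..m} \<union> (if Suc m \<in> B then {Suc m} else {})"
    by (auto simp: le_Suc_eq)
  define X where "X = {n\<in>B \<inter> {1..m}. card (B \<inter> {1..n-1}) < k}"
  have fX: "finite X" by (simp add: X_def)
  have nX: "Suc m \<notin> X" by (simp add: X_def)
  have fB: "finite (B \<inter> {1..m})" by simp
  have nB: "Suc m \<notin> B \<inter> {1..m}" by simp
  show ?case
  proof (cases "Suc m \<in> B")
    case True
    show ?thesis
    proof (cases "card (B \<inter> {1..m}) < k")
      case True2: True
      have a: "{n\<in>B \<inter> {1..Suc m}. card (B \<inter> {1..n-1}) < k} = insert (Suc m) X"
        unfolding X_def using True True2 by (auto simp: le_Suc_eq)
      have b: "B \<inter> {1..Suc m} = insert (Suc m) (B \<inter> {1..m})" using e2 True by simp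
      have c1: "card {n\<in>B \<inter> {1..Suc m}. card (B \<inter> {1..n-1}) < k} = Suc (card X)"
        using a fX nX by simp
      have c2: "card (B \<inter> {1..Suc m}) = Suc (card (B \<inter> {1..m}))" using b fB nB by simp
      have c3: "card X = min k (card (B \<inter> {1..m}))" using Suc.IH by (simp add: X_def)
      show ?thesis using c1 c2 c3 True2 by simp
    next
      case False2: False
      have a: "{n\<in>B \<inter> {1..Suc m}. card (B \<inter> {1..n-1}) < k} = X"
        unfolding X_def using True False2 by (auto simp: le_Suc_eq)
      have b: "B \<inter> {1..Suc m} = insert (Suc m) (B \<inter> {1..m})" using e2 True by simp
      have c1: "card {n\<in>B \<inter> {1..Suc m}. card (B \<inter> {1..n-1}) < k} = card X"
        using a by simp
      have c2: "card (B \<inter> {1..Suc m}) = Suc (card (B \<inter> {1..m}))" using b fB nB by simp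
      have c3: "card X = min k (card (B \<inter> {1..m}))" using Suc.IH by (simp add: X_def)
      show ?thesis using c1 c2 c3 False2 by simp
    qed
  next
    case False
    have a: "{n\<in>B \<inter> {1..Suc m}. card (B \<inter> {1..n-1}) < k} = X"
      unfolding X_def using False by (auto simp: le_Suc_eq)
    have b: "B \<inter> {1..Suc m} = B \<inter> {1..m}" using e2 False by simp
    have c3: "card X = min k (card (B \<inter> {1..m}))" using Suc.IH by (simp add: X_def)
    have c1: "card {n\<in>B \<inter> {1..Suc m}. card (B \<inter> {1..n-1}) < k} = card X"
      using a by simp
    have c2: "card (B \<inter> {1..Suc m}) = card (B \<inter> {1..m})" using b by simp
    show ?thesis using c1 c2 c3 by linarith
  qed
qed

lemma cardS:
  fixes B :: "nat set"
  assumes "B \<subseteq> {1..N}" "k \<le> card B"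
  shows "card {n\<in>B. card (B \<inter> {1..n-1}) < k} = k"
proof -
  have "B \<inter> {1..N} = B" using assms by auto
  then show ?thesis using cardS_aux[of B N k] assms by simp
qed

lemma cardFB:
  fixes B :: "nat set"
  assumes "B \<subseteq> {1..N}" "k \<le> card B"
  shows "2*k - card (B \<inter> {1..k}) \<le> card ({1..k} \<union> {n\<in>B. card (B \<inter> {1..n-1}) < k})"
proof -
  define S where "S = {n\<in>B. card (B \<inter> {1..n-1}) < k}"
  have finB: "finite B" using assms finite_subset by auto
  have finS: "finite S" using finB by (simp add: S_def)
  have cS: "card S = k" using cardS[OF assms] by (simp add: S_def)
  have "{1..k} \<union> S = {1..k} \<union> (S - {1..k})" by auto
  moreover have "card ({1..k} \<union> (S - {1..k})) = card {1..k} + card (S - {1..k})"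
    using finS by (intro card_Un_disjoint) auto
  ultimately have "card ({1..k} \<union> S) = k + card (S - {1..k})" by simp
  moreover have "card (S - {1..k}) = card S - card (S \<inter> {1..k})"
    using finS by (simp add: card_Diff_subset_Int)
  moreover have "card (S \<inter> {1..k}) \<le> card (B \<inter> {1..k})"
    using finB by (intro card_mono) (auto simp: S_def)
  moreover have "card (S \<inter> {1..k}) \<le> card S" using finS by (intro card_mono) auto
  ultimately have "2*k - card (B \<inter> {1..k}) \<le> card ({1..k} \<union> S)" using cS by linarith
  then show ?thesis by (simp add: S_def)
qed

context zsetup begin

lemma TT_U: "TT (\<lambda>n. U n \<omega>) y m = Tcount U m y \<omega>"
  by (simp add: TT_def Tcount_def)

lemma qok_Q: "\<omega> \<in> space M \<Longrightarrow> qok (\<lambda>n. Q n \<omega>)"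
  using Q_vals by (auto simp: qok_def)

lemma cyl_event:
  assumes F: "F \<subseteq> {1..}" "finite F"
  shows "{\<omega>\<in>space M. (\<forall>n\<in>{1..N}. (U n \<omega> \<le> x) = (n\<in>B)) \<and> (\<forall>n\<in>F. Q n \<omega> = c n)} \<in> events"
proof -
  have a: "{\<omega>\<in>space M. \<forall>n\<in>{1..N}. (U n \<omega> \<le> x) = (n\<in>B)} \<in> events"
  proof (rule sets.sets_Collect_finite_All)
    fix n assume "n \<in> {1..N}"
    then have [measurable]: "U n \<in> borel_measurable M" using U_meas by auto
    show "{\<omega>\<in>space M. (U n \<omega> \<le> x) = (n\<in>B)} \<in> events" by measurable
  qed simp
  have b: "{\<omega>\<in>space M. \<forall>n\<in>F. Q n \<omega> = c n} \<in> events"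
  proof (rule sets.sets_Collect_finite_All)
    fix n assume "n \<in> F"
    then have [measurable]: "Q n \<in> borel_measurable M" using Q_meas F by auto
    show "{\<omega>\<in>space M. Q n \<omega> = c n} \<in> events" by measurable
  qed (use F in simp)
  have "{\<omega>\<in>space M. (\<forall>n\<in>{1..N}. (U n \<omega> \<le> x) = (n\<in>B)) \<and> (\<forall>n\<in>F. Q n \<omega> = c n)}
     = {\<omega>\<in>space M. \<forall>n\<in>{1..N}. (U n \<omega> \<le> x) = (n\<in>B)} \<inter> {\<omega>\<in>space M. \<forall>n\<in>F. Q n \<omega> = c n}" by auto
  then show ?thesis using a b by simp
qed

lemma null_event: "(\<Union>n. U (Suc n) -` {1<..} \<inter> space M) \<in> null_sets M"
proof (rule null_sets_UN)
  fix n
  have [measurable]: "U (Suc n) \<in> borel_measurable M" using U_meas by auto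
  have ev: "U (Suc n) -` {1<..} \<inter> space M \<in> events" by measurable
  then show "U (Suc n) -` {1<..} \<inter> space M \<in> null_sets M"
    using U_gt1[of "Suc n"] by (auto simp: emeasure_eq_measure)
qed


lemma tt_meas: "(\<lambda>\<omega>. tt (\<lambda>n. Q n \<omega>) (\<lambda>n. U n \<omega>) y m) \<in> borel_measurable M"
proof -
  have eq: "(\<lambda>\<omega>. tt (\<lambda>n. Q n \<omega>) (\<lambda>n. U n \<omega>) y m) =
    (\<lambda>\<omega>. (\<Prod>j\<in>{1..m}. if U j \<omega> \<le> y then 1/2 else 1) * Q (Suc m) \<omega> * (if U (Suc m) \<omega> \<le> y then 1 else 0))"
  proof
    fix \<omega>
    have "(\<Prod>j\<in>{1..m}. if U j \<omega> \<le> y then 1/2 else (1::real)) = (1/2)^card {j\<in>{1..m}. U j \<omega> \<le> y}"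
      by (rule prod_if_card) simp
    then show "tt (\<lambda>n. Q n \<omega>) (\<lambda>n. U n \<omega>) y m =
      (\<Prod>j\<in>{1..m}. if U j \<omega> \<le> y then 1/2 else 1) * Q (Suc m) \<omega> * (if U (Suc m) \<omega> \<le> y then 1 else 0)"
      by (simp add: tt_def TT_def)
  qed
  have [measurable]: "Q (Suc m) \<in> borel_measurable M" "U (Suc m) \<in> borel_measurable M"
    using Q_meas U_meas by auto
  have [measurable]: "(\<lambda>\<omega>. \<Prod>j\<in>{1..m}. if U j \<omega> \<le> y then 1/2 else (1::real)) \<in> borel_measurable M"
  proof (rule borel_measurable_prod)
    fix j assume "j \<in> {1..m}"
    then have [measurable]: "U j \<in> borel_measurable M" using U_meas by auto
    show "(\<lambda>\<omega>. if U j \<omega> \<le> y then 1/2 else (1::real)) \<in> borel_measurable M" by measurable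
  qed
  show ?thesis unfolding eq by measurable
qed

lemma zeta_meas: "zeta Q U y \<in> borel_measurable M"
proof -
  have "zeta Q U y = (\<lambda>\<omega>. suminf (\<lambda>m. tt (\<lambda>n. Q n \<omega>) (\<lambda>n. U n \<omega>) y m))"
    by (simp add: zeta_eq[abs_def])
  also have "\<dots> \<in> borel_measurable M"
    by (rule borel_measurable_suminf) (rule tt_meas)
  finally show ?thesis .
qed

lemma rect_N:
  assumes kN: "k \<le> N" "1 \<le> N"
  shows "prob {\<omega>\<in>space M. zeta Q U x \<omega> \<in> {a..a+(1/2)^k} \<and> zeta Q U 1 \<omega> \<in> {b..b+(1/2)^k}}
          \<le> 16*((1+x)/4)^k + 2^k*(1-x/2)^(N-k)"
proof -
  define Cyl where "Cyl B F c = {\<omega>\<in>space M. (\<forall>n\<in>{1..N}. (U n \<omega> \<le> x) = (n\<in>B)) \<and> (\<forall>n\<in>F. Q n \<omega> = c n)}"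
    for B F and c :: "nat \<Rightarrow> real"
  define FB where "FB B = {1..k} \<union> {n\<in>B. card (B \<inter> {1..n-1}) < k}" for B :: "nat set"
  define dig where "dig z e = (of_int (\<lfloor>(of_int z / 2^k :: real) * 2^e\<rfloor> mod 2) :: real)" for z :: int and e :: nat
  define cc where "cc B z1 zx n = (if n \<le> k then dig z1 (n-1) else dig zx (card (B \<inter> {1..n-1})))"
    for B z1 zx n
  define gx where "gx = \<lceil>a*2^k - 2\<rceil>"
  define g1 where "g1 = \<lceil>b*2^k - 2\<rceil>"
  define P1 where "P1 = {B\<in>Pow{1..N}. card B < k}"
  define P2' where "P2' = {B\<in>Pow{1..N}. k \<le> card B}"
  define P2 where "P2 = P2' \<times> ({0..<4::int} \<times> {0..<4::int})"
  define Big1 where "Big1 = (\<Union>B\<in>P1. Cyl B {} (\<lambda>_. 0))"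
  define C2 where "C2 p = (case p of (B,i,j) \<Rightarrow> Cyl B (FB B) (cc B (g1+j) (gx+i)))" for p
  define Big2 where "Big2 = (\<Union>p\<in>P2. C2 p)"
  define Null where "Null = (\<Union>n. U (Suc n) -` {1<..} \<inter> space M)"
  define R where "R = {\<omega>\<in>space M. zeta Q U x \<omega> \<in> {a..a+(1/2)^k} \<and> zeta Q U 1 \<omega> \<in> {b..b+(1/2)^k}}"
  define K where "K = (2::real)^k"
  have Kpos: "0 < K" by (simp add: K_def)
  have hK: "(1/2::real)^k = 1/K" by (simp add: K_def power_one_over)
  have sub: "R \<subseteq> Big1 \<union> Big2 \<union> Null"
  proof
    fix \<omega> assume w: "\<omega> \<in> R"
    show "\<omega> \<in> Big1 \<union> Big2 \<union> Null"
    proof (cases "\<omega> \<in> Null")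
      case True then show ?thesis by simp
    next
      case False
      have sp: "\<omega> \<in> space M" using w by (simp add: R_def)
      have U1: "U n \<omega> \<le> 1" if "1 \<le> n" for n
      proof -
        have "n = Suc (n - 1)" using that by simp
        moreover have "U (Suc (n-1)) \<omega> \<le> 1" using False sp by (auto simp: Null_def not_less)
        ultimately show ?thesis by simp
      qed
      define B where "B = {n\<in>{1..N}. U n \<omega> \<le> x}"
      have BP: "B \<in> Pow {1..N}" by (auto simp: B_def)
      have pat: "\<forall>n\<in>{1..N}. (U n \<omega> \<le> x) = (n\<in>B)" by (auto simp: B_def)
      show ?thesis
      proof (cases "card B < k")
        case True
        then have "\<omega> \<in> Cyl B {} (\<lambda>_. 0)" using sp pat by (simp add: Cyl_def)
        then show ?thesis using True BP by (auto simp: Big1_def P1_def)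
      next
        case False
        define q where "q = (\<lambda>n. Q n \<omega>)"
        define u where "u = (\<lambda>n. U n \<omega>)"
        have qq: "qok q" using qok_Q[OF sp] by (simp add: q_def)
        have TTx: "TT u x m = card (B \<inter> {1..m})" if "m \<le> N" for m
          using that unfolding TT_def B_def u_def by (intro arg_cong[where f=card]) auto
        have TT1: "TT u 1 m = m" for m
        proof -
          have "{j\<in>{1..m}. u j \<le> 1} = {1..m}" using U1 by (auto simp: u_def)
          then show ?thesis by (simp add: TT_def)
        qed
        have zx: "zeta Q U x \<omega> = suminf (tt q u x)" by (simp add: zeta_eq q_def u_def)
        have z1: "zeta Q U 1 \<omega> = suminf (tt q u 1)" by (simp add: zeta_eq q_def u_def)
        have "B \<inter> {1..N} = B" by (auto simp: B_def)
        then have kTx: "k \<le> TT u x N" using False TTx[of N] by simp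
        have kT1: "k \<le> TT u 1 N" using TT1 kN by simp
        note apx = zeta_approx[OF qq kTx] and ap1 = zeta_approx[OF qq kT1]
        obtain zxx where zxx: "AA q u x k N * 2^k = of_int zxx" using grid[OF qq] by blast
        obtain z11 where z11: "AA q u 1 k N * 2^k = of_int z11" using grid[OF qq] by blast
        have Ax: "AA q u x k N = of_int zxx / K" using zxx Kpos by (simp add: K_def field_simps)
        have A1: "AA q u 1 k N = of_int z11 / K" using z11 Kpos by (simp add: K_def field_simps)
        have bx: "a \<le> suminf (tt q u x)" "suminf (tt q u x) \<le> a + 1/K" using w zx hK by (auto simp: R_def)
        have b1: "b \<le> suminf (tt q u 1)" "suminf (tt q u 1) \<le> b + 1/K" using w z1 hK by (auto simp: R_def)
        have ix: "gx \<le> zxx \<and> zxx < gx + 4"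
        proof -
          have "of_int zxx / K \<le> a + 1/K" "a \<le> of_int zxx / K + 2/K" using apx bx Ax hK by auto
          then have e1: "of_int zxx \<le> a*K + 1" "a*K - 2 \<le> of_int zxx" using Kpos by (auto simp: field_simps)
          have "gx \<le> zxx" unfolding gx_def using e1(2) by (intro ceiling_le) (simp add: K_def)
          moreover have "a*K - 2 \<le> of_int gx" by (simp add: gx_def K_def)
          ultimately show ?thesis using e1 by linarith
        qed
        have i1: "g1 \<le> z11 \<and> z11 < g1 + 4"
        proof -
          have "of_int z11 / K \<le> b + 1/K" "b \<le> of_int z11 / K + 2/K" using ap1 b1 A1 hK by auto
          then have e1: "of_int z11 \<le> b*K + 1" "b*K - 2 \<le> of_int z11" using Kpos by (auto simp: field_simps)
          have "g1 \<le> z11" unfolding g1_def using e1(2) by (intro ceiling_le) (simp add: K_def)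
          moreover have "b*K - 2 \<le> of_int g1" by (simp add: g1_def K_def)
          ultimately show ?thesis using e1 by linarith
        qed
        have inF: "Q n \<omega> = cc B z11 zxx n" if nF: "n \<in> FB B" for n
        proof (cases "n \<le> k")
          case True
          then have n1: "1 \<le> n" using nF BP by (auto simp: FB_def)
          then obtain p where np: "n = Suc p" by (cases n) auto
          have "q n = of_int (\<lfloor>AA q u 1 k N * 2^(TT u 1 p)\<rfloor> mod 2)"
            by (rule digit[OF qq np]) (use True kN U1[OF n1] np TT1 in \<open>auto simp: u_def\<close>)
          also have "\<dots> = cc B z11 zxx n" using True np by (simp add: A1 TT1 cc_def dig_def K_def)
          finally show ?thesis by (simp add: q_def)
        next
          case False
          then have nB: "n \<in> B" and cB: "card (B \<inter> {1..n-1}) < k" using nF by (auto simp: FB_def)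
          then have n1: "1 \<le> n" "n \<le> N" using BP by auto
          define p where "p = n - 1"
          have np: "n = Suc p" using n1 by (simp add: p_def)
          have TTp: "TT u x p = card (B \<inter> {1..n-1})" using TTx[of p] n1 np by simp
          have "q n = of_int (\<lfloor>AA q u x k N * 2^(TT u x p)\<rfloor> mod 2)"
            by (rule digit[OF qq np]) (use n1 nB cB TTp in \<open>auto simp: u_def B_def\<close>)
          also have "\<dots> = cc B z11 zxx n" using False np TTp by (simp add: Ax cc_def dig_def K_def)
          finally show ?thesis by (simp add: q_def)
        qed
        have "\<omega> \<in> Cyl B (FB B) (cc B (g1 + (z11 - g1)) (gx + (zxx - gx)))"
          using sp pat inF by (simp add: Cyl_def)
        moreover have "(B, zxx - gx, z11 - g1) \<in> P2" using BP False ix i1 by (auto simp: P2_def P2'_def)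
        ultimately have "\<omega> \<in> Big2" by (force simp: Big2_def C2_def)
        then show ?thesis by simp
      qed
    qed
  qed
  have finP1: "finite P1" by (simp add: P1_def)
  have finP2': "finite P2'" by (simp add: P2'_def)
  have finP2: "finite P2" by (simp add: P2_def finP2')
  have FBsub: "FB B \<subseteq> {1..}" "finite (FB B)" if "B \<in> Pow {1..N}" for B
    using that finite_subset[of B "{1..N}"] by (auto simp: FB_def)
  have ev1: "Cyl B {} c \<in> events" for B c unfolding Cyl_def by (rule cyl_event) auto
  have ev2: "C2 p \<in> events" if "p \<in> P2" for p
  proof -
    obtain B i j where pB: "p = (B, i, j)" by (cases p) auto
    have "B \<in> Pow {1..N}" using that pB by (auto simp: P2_def P2'_def)
    then have "FB B \<subseteq> {1..}" "finite (FB B)" using FBsub by auto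
    then have "Cyl B (FB B) (cc B (g1+j) (gx+i)) \<in> events" unfolding Cyl_def by (rule cyl_event)
    then show ?thesis unfolding pB C2_def by simp
  qed
  have Big1ev: "Big1 \<in> events" unfolding Big1_def using finP1 ev1 by auto
  have Big2ev: "Big2 \<in> events" unfolding Big2_def using finP2 ev2 by auto
  have nul: "Null \<in> null_sets M" unfolding Null_def by (rule null_event)
  have "prob R \<le> prob (Big1 \<union> Big2 \<union> Null)"
    using sub Big1ev Big2ev nul by (intro finite_measure_mono) auto
  also have "\<dots> = prob (Big1 \<union> Big2)" using Big1ev Big2ev nul by (intro measure_Un_null_set) auto
  also have "\<dots> \<le> prob Big1 + prob Big2"
    using Big1ev Big2ev by (intro measure_subadditive) (auto simp: emeasure_eq_measure)
  also have "prob Big1 \<le> (\<Sum>B\<in>P1. prob (Cyl B {} (\<lambda>_. 0)))"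
    unfolding Big1_def using finP1 ev1 by (intro finite_measure_subadditive_finite) auto
  also have "\<dots> \<le> (\<Sum>B\<in>P1. wB x N B)"
  proof (rule sum_mono)
    fix B assume "B \<in> P1"
    then show "prob (Cyl B {} (\<lambda>_. 0)) \<le> wB x N B"
      using cyl_prob[of "{}" B N "\<lambda>_. 0"] kN by (auto simp: Cyl_def P1_def)
  qed
  also have "\<dots> = (\<Sum>B\<in>Pow {1..N}. wB x N B * (if card B < k then 1 else 0))"
  proof -
    have "(\<Sum>B\<in>P1. wB x N B) = (\<Sum>B\<in>Pow {1..N}. if card B < k then wB x N B else 0)"
      unfolding P1_def by (rule sum.inter_filter) simp
    then show ?thesis by (simp add: if_distrib cong: if_cong)
  qed
  also have "\<dots> \<le> 2^k * (1 - x/2)^(N-k)" using sumB[of k N x] kN x by simp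
  also have "prob Big2 \<le> (\<Sum>p\<in>P2. prob (C2 p))"
    unfolding Big2_def using finP2 ev2 by (intro finite_measure_subadditive_finite) auto
  also have "\<dots> \<le> (\<Sum>p\<in>P2. wB x N (fst p) * (1/2::real)^(2*k - card (fst p \<inter> {1..k})))"
  proof (rule sum_mono)
    fix p assume p: "p \<in> P2"
    obtain B i j where pB: "p = (B, i, j)" by (cases p) auto
    have B: "B \<in> Pow {1..N}" "k \<le> card B" using p pB by (auto simp: P2_def P2'_def)
    have "prob (Cyl B (FB B) (cc B (g1+j) (gx+i))) \<le> wB x N B * (1/2)^card (FB B)"
      unfolding Cyl_def using FBsub[OF B(1)] B kN by (intro cyl_prob) auto
    then have "prob (C2 p) \<le> wB x N B * (1/2)^card (FB B)" by (simp add: pB C2_def)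
    also have "\<dots> \<le> wB x N B * (1/2::real)^(2*k - card (B \<inter> {1..k}))"
    proof (rule mult_left_mono)
      show "(1/2::real)^card (FB B) \<le> (1/2)^(2*k - card (B \<inter> {1..k}))"
        using cardFB[of B N k] B by (intro power_decreasing) (auto simp: FB_def)
      show "0 \<le> wB x N B" using x by (intro wB_nonneg) auto
    qed
    finally show "prob (C2 p) \<le> wB x N (fst p) * (1/2::real)^(2*k - card (fst p \<inter> {1..k}))"
      using pB by simp
  qed
  also have "\<dots> = (\<Sum>B\<in>P2'. \<Sum>c\<in>{0..<4::int} \<times> {0..<4::int}. wB x N B * (1/2::real)^(2*k - card (B \<inter> {1..k})))"
    unfolding P2_def by (subst sum.cartesian_product) (auto intro!: sum.cong)
  also have "\<dots> = 16 * (\<Sum>B\<in>P2'. wB x N B * (1/2::real)^(2*k - card (B \<inter> {1..k})))"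
    by (simp add: sum_distrib_left)
  also have "(\<Sum>B\<in>P2'. wB x N B * (1/2::real)^(2*k - card (B \<inter> {1..k})))
      \<le> (\<Sum>B\<in>Pow {1..N}. wB x N B * (1/2::real)^(2*k - card (B \<inter> {1..k})))"
    using x by (intro sum_mono2) (auto simp: P2'_def intro!: mult_nonneg_nonneg wB_nonneg)
  also have "\<dots> = ((1+x)/4)^k" using sumA[of k N x] kN by simp
  finally show ?thesis by (simp add: R_def)
qed

end



context zsetup begin

lemma rect:
  "prob {\<omega>\<in>space M. zeta Q U x \<omega> \<in> {a..a+(1/2)^k} \<and> zeta Q U 1 \<omega> \<in> {b..b+(1/2)^k}}
          \<le> 16*((1+x)/4)^k"
proof (rule field_le_epsilon)
  fix e :: real assume e: "0 < e"
  obtain m where m: "(1 - x/2)^m < e / 2^k" using real_arch_pow_inv[of "e / 2^k" "1 - x/2"] e x by auto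
  define N where "N = k + m + 1"
  have "prob {\<omega>\<in>space M. zeta Q U x \<omega> \<in> {a..a+(1/2)^k} \<and> zeta Q U 1 \<omega> \<in> {b..b+(1/2)^k}}
          \<le> 16*((1+x)/4)^k + 2^k*(1-x/2)^(N-k)" by (rule rect_N) (auto simp: N_def)
  also have "(1-x/2)^(N-k) \<le> (1-x/2)^m" unfolding N_def using x by (intro power_decreasing) auto
  then have "2^k*(1-x/2)^(N-k) \<le> 2^k * (1-x/2)^m" by simp
  also have "2^k * (1-x/2)^m \<le> e" using m by (simp add: field_simps)
  finally show "prob {\<omega>\<in>space M. zeta Q U x \<omega> \<in> {a..a+(1/2)^k} \<and> zeta Q U 1 \<omega> \<in> {b..b+(1/2)^k}}
          \<le> 16*((1+x)/4)^k + e" by simp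
qed

definition "ZZ = (\<lambda>\<omega>. (zeta Q U x \<omega>, zeta Q U 1 \<omega>))"

lemma ZZ_meas: "ZZ \<in> borel_measurable M"
  unfolding ZZ_def using zeta_meas[of x] zeta_meas[of 1] by measurable

lemma rect_set:
  assumes C: "bounded C" "C \<noteq> {}" and d: "2 * diameter C \<le> (1/2)^k"
  shows "prob (ZZ -` C \<inter> space M) \<le> 16*((1+x)/4)^k"
proof -
  obtain p0 where p0: "p0 \<in> C" using C by auto
  define a where "a = fst p0 - diameter C"
  define b where "b = snd p0 - diameter C"
  have "ZZ -` C \<inter> space M \<subseteq> {\<omega>\<in>space M. zeta Q U x \<omega> \<in> {a..a+(1/2)^k} \<and> zeta Q U 1 \<omega> \<in> {b..b+(1/2)^k}}"
  proof
    fix \<omega> assume w: "\<omega> \<in> ZZ -` C \<inter> space M"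
    then have pC: "ZZ \<omega> \<in> C" by simp
    have dd: "dist (ZZ \<omega>) p0 \<le> diameter C" by (rule diameter_bounded_bound[OF C(1) pC p0])
    have "dist (fst (ZZ \<omega>)) (fst p0) \<le> diameter C" using dist_fst_le[of "ZZ \<omega>" p0] dd by linarith
    moreover have "dist (snd (ZZ \<omega>)) (snd p0) \<le> diameter C" using dist_snd_le[of "ZZ \<omega>" p0] dd by linarith
    ultimately show "\<omega> \<in> {\<omega>\<in>space M. zeta Q U x \<omega> \<in> {a..a+(1/2)^k} \<and> zeta Q U 1 \<omega> \<in> {b..b+(1/2)^k}}"
      using w d by (auto simp: ZZ_def a_def b_def dist_real_def abs_le_iff)
  qed
  moreover have "{\<omega>\<in>space M. zeta Q U x \<omega> \<in> {a..a+(1/2)^k} \<and> zeta Q U 1 \<omega> \<in> {b..b+(1/2)^k}} \<in> events"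
    using zeta_meas[of x] zeta_meas[of 1] by measurable
  ultimately have "prob (ZZ -` C \<inter> space M) \<le> prob {\<omega>\<in>space M. zeta Q U x \<omega> \<in> {a..a+(1/2)^k} \<and> zeta Q U 1 \<omega> \<in> {b..b+(1/2)^k}}"
    by (rule finite_measure_mono)
  also have "\<dots> \<le> 16*((1+x)/4)^k" by (rule rect)
  finally show ?thesis .
qed


definition "s0 = 2 - ln (1 + x) / ln 2"

lemma s0_bounds: "0 \<le> s0" "s0 \<le> 2"
proof -
  have "0 < ln (1+x)" using x by simp
  moreover have "ln (1+x) < ln 2" using x by simp
  moreover have "0 < ln (2::real)" by simp
  ultimately have a: "0 < ln (1+x) / ln 2" and b0: "ln (1+x) / ln 2 < ln 2 / ln 2"
    by (auto intro: divide_strict_right_mono)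
  then have b: "ln (1+x) / ln 2 < 1" by simp
  show "0 \<le> s0" using b unfolding s0_def by linarith
  show "s0 \<le> 2" using a unfolding s0_def by linarith
qed

lemma pow_s0: "((1/2::real)^k) powr s0 = ((1+x)/4)^k"
proof -
  have l2: "0 < ln (2::real)" by simp
  have "((1/2::real)^k) powr s0 = exp (s0 * ln ((1/2)^k))" by (simp add: powr_def)
  also have "ln ((1/2::real)^k) = real k * ln (1/2)" by (simp add: ln_realpow)
  also have "ln (1/2::real) = - ln 2" by (simp add: ln_div)
  also have "s0 * (real k * - ln 2) = real k * (ln (1+x) - 2 * ln 2)"
    using l2 by (simp add: s0_def field_simps)
  also have "2 * ln (2::real) = ln 4"
    using ln_realpow[of 2 2] by simp
  also have "ln (1+x) - ln 4 = ln ((1+x)/4)" using x by (simp add: ln_div)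
  also have "exp (real k * ln ((1+x)/4)) = exp (ln (((1+x)/4)^k))"
    using x by (simp add: ln_realpow)
  also have "\<dots> = ((1+x)/4)^k" using x by simp
  finally show ?thesis .
qed

lemma holder:
  assumes C: "bounded C" "C \<noteq> {}" and d: "diameter C \<le> 1/4"
  shows "prob (ZZ -` C \<inter> space M) \<le> 256 * diameter C powr s0"
proof -
  define d where "d = diameter C"
  have d0: "0 \<le> d" using diameter_ge_0[OF C(1)] by (simp add: d_def)
  show ?thesis
  proof (cases "d = 0")
    case True
    have "prob (ZZ -` C \<inter> space M) \<le> 0"
    proof (rule field_le_epsilon)
      fix e :: real assume e: "0 < e"
      obtain k where k: "((1+x)/4)^k < e/16" using real_arch_pow_inv[of "e/16" "(1+x)/4"] e x by auto
      have "prob (ZZ -` C \<inter> space M) \<le> 16*((1+x)/4)^k"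
        by (rule rect_set[OF C]) (use True in \<open>simp add: d_def\<close>)
      then show "prob (ZZ -` C \<inter> space M) \<le> 0 + e" using k by simp
    qed
    then show ?thesis using True by (simp add: d_def)
  next
    case False
    then have dpos: "0 < 2*d" using d0 by simp
    have ex: "\<exists>m. (1/2::real)^m < 2*d" using real_arch_pow_inv[OF dpos] by simp
    define m where "m = (LEAST m. (1/2::real)^m < 2*d)"
    have m1: "(1/2::real)^m < 2*d" unfolding m_def using ex by (rule LeastI_ex)
    have m0: "m \<noteq> 0"
    proof
      assume "m = 0"
      with m1 have "1 < 2*d" by simp
      with d show False by (simp add: d_def)
    qed
    define k where "k = m - 1"
    have mk: "m = Suc k" using m0 by (simp add: k_def)
    have k1: "2*d \<le> (1/2::real)^k"
    proof (rule ccontr)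
      assume "\<not> 2*d \<le> (1/2::real)^k"
      then have "(1/2::real)^k < 2*d" by simp
      then have "m \<le> k" unfolding m_def by (rule Least_le)
      then show False using mk by simp
    qed
    have k2: "(1/2::real)^k < 4*d" using m1 mk by simp
    have "prob (ZZ -` C \<inter> space M) \<le> 16*((1+x)/4)^k"
      by (rule rect_set[OF C]) (use k1 in \<open>simp add: d_def\<close>)
    also have "((1+x)/4)^k = ((1/2::real)^k) powr s0" by (simp add: pow_s0)
    also have "\<dots> \<le> (4*d) powr s0" using k2 s0_bounds by (intro powr_mono2) auto
    also have "\<dots> = 4 powr s0 * d powr s0" using d0 by (simp add: powr_mult)
    also have "4 powr s0 \<le> (4::real) powr 2" using s0_bounds by (intro powr_mono) auto
    also have "(4::real) powr 2 = 16" by simp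
    finally show ?thesis using d0 by (simp add: d_def mult_right_mono)
  qed
qed


lemma hcost_nonneg: "0 \<le> hcost t C"
  by (simp add: hcost_def)

lemma hcost_closure: "bounded C \<Longrightarrow> hcost t (closure C) = hcost t C"
  by (simp add: hcost_def diameter_closure)

lemma hcost_bound:
  assumes C: "bounded C" "diameter C \<le> 1/4" and t: "0 \<le> t" "t \<le> s0"
  shows "prob (ZZ -` C \<inter> space M) \<le> 256 * hcost t C"
proof (cases "C = {}")
  case True then show ?thesis by (simp add: hcost_def)
next
  case ne: False
  show ?thesis
  proof (cases "t = 0")
    case True
    have p1: "prob (ZZ -` C \<inter> space M) \<le> 1" by simp
    have h1: "hcost t C = 1" using True ne by (simp add: hcost_def)
    show ?thesis unfolding h1 using p1 by linarith
  next
    case False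
    have d0: "0 \<le> diameter C" using diameter_ge_0[OF C(1)] .
    have "prob (ZZ -` C \<inter> space M) \<le> 256 * diameter C powr s0" by (rule holder[OF C(1) ne C(2)])
    also have "diameter C powr s0 \<le> diameter C powr t" using t d0 C(2) by (intro powr_mono') auto
    then have "256 * diameter C powr s0 \<le> 256 * diameter C powr t" by simp
    finally show ?thesis using False ne by (simp add: hcost_def)
  qed
qed

lemma pre_bound:
  assumes E: "E \<in> sets borel" "emeasure (distr M borel ZZ) E = 1" and t: "0 \<le> t" "t \<le> s0"
  shows "ennreal (1/256) \<le> hausdorff_pre t (1/4) E"
  unfolding hausdorff_pre_def
proof (rule Inf_greatest)
  fix S assume "S \<in> {(\<Sum>i. ennreal (hcost t (C i))) | C :: nat \<Rightarrow> (real \<times> real) set.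
            (\<forall>i. bounded (C i) \<and> diameter (C i) \<le> 1/4) \<and> E \<subseteq> (\<Union>i. C i)}"
  then obtain C :: "nat \<Rightarrow> (real \<times> real) set" where C: "\<And>i. bounded (C i)" "\<And>i. diameter (C i) \<le> 1/4"
    and EC: "E \<subseteq> (\<Union>i. C i)" and S: "S = (\<Sum>i. ennreal (hcost t (C i)))" by blast
  define \<mu> where "\<mu> = distr M borel ZZ"
  have cl: "closure (C i) \<in> sets borel" for i by (rule borel_closed) simp
  have sm: "sets \<mu> = sets borel" by (simp add: \<mu>_def)
  have "1 = emeasure \<mu> E" using E by (simp add: \<mu>_def)
  also have "\<dots> \<le> emeasure \<mu> (\<Union>i. closure (C i))"
  proof (rule emeasure_mono)
    show "E \<subseteq> (\<Union>i. closure (C i))" using EC closure_subset by blast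
    show "(\<Union>i. closure (C i)) \<in> sets \<mu>" using cl sm by auto
  qed
  also have "\<dots> \<le> (\<Sum>i. emeasure \<mu> (closure (C i)))"
  proof (rule emeasure_subadditive_countably)
    show "range (\<lambda>i. closure (C i)) \<subseteq> sets \<mu>" unfolding sm using cl by (simp add: image_subset_iff)
  qed
  also have "\<dots> \<le> (\<Sum>i. ennreal 256 * ennreal (hcost t (C i)))"
  proof (rule suminf_le)
    fix i
    have "emeasure \<mu> (closure (C i)) = emeasure M (ZZ -` closure (C i) \<inter> space M)"
      unfolding \<mu>_def using ZZ_meas cl by (intro emeasure_distr) auto
    also have "\<dots> = ennreal (prob (ZZ -` closure (C i) \<inter> space M))" by (simp add: emeasure_eq_measure)
    also have "\<dots> \<le> ennreal (256 * hcost t (closure (C i)))"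
      using C(1)[of i] C(2)[of i] t by (intro ennreal_leI hcost_bound) (auto simp: diameter_closure)
    also have "\<dots> = ennreal 256 * ennreal (hcost t (C i))"
      using C(1)[of i] by (simp add: hcost_closure ennreal_mult hcost_nonneg)
    finally show "emeasure \<mu> (closure (C i)) \<le> ennreal 256 * ennreal (hcost t (C i))" .
  qed auto
  also have "\<dots> = ennreal 256 * S" by (simp add: S)
  finally have "1 \<le> ennreal 256 * S" .
  then have "ennreal (1/256) * 1 \<le> ennreal (1/256) * (ennreal 256 * S)" by (rule mult_left_mono) simp
  also have "\<dots> = (ennreal (1/256) * ennreal 256) * S" by (rule mult.assoc[symmetric])
  also have "ennreal (1/256) * ennreal 256 = 1" by (subst ennreal_mult[symmetric]) auto
  also have "1 * S = S" by simp
  finally show "ennreal (1/256) \<le> S" by simp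
qed

lemma dimE:
  assumes E: "E \<in> sets borel" "emeasure (distr M borel ZZ) E = 1"
  shows "ereal s0 \<le> hausdorff_dim E"
  unfolding hausdorff_dim_def
proof (rule Inf_greatest)
  fix r assume "r \<in> {ereal s | s. s \<ge> 0 \<and> hausdorff_measure s E = 0}"
  then obtain s where r: "r = ereal s" and s: "0 \<le> s" "hausdorff_measure s E = 0" by blast
  show "ereal s0 \<le> r"
  proof (rule ccontr)
    assume "\<not> ereal s0 \<le> r"
    then have "s \<le> s0" using r by simp
    then have "ennreal (1/256) \<le> hausdorff_pre s (1/4) E" using pre_bound[OF E s(1)] by simp
    also have "hausdorff_pre s (1/4) E \<le> hausdorff_measure s E"
      unfolding hausdorff_measure_def by (rule SUP_upper) simp
    finally show False using s(2) by simp
  qed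
qed

lemma main: "ereal s0 \<le> hausdorff_dim_measure (distr M borel ZZ)"
  unfolding hausdorff_dim_measure_def
  by (rule Inf_greatest) (auto intro: dimE)

end

theorem theorem7p3:
  fixes M :: "'a measure"
    and Q U :: "nat \<Rightarrow> 'a \<Rightarrow> real"
    and x :: real
  assumes "prob_space M"
    and indep: "prob_space.indep_vars M (\<lambda>_. borel)
                  (\<lambda>i. case i of Inl n \<Rightarrow> Q n | Inr n \<Rightarrow> U n)
                  (Inl ` {1..} \<union> Inr ` {1..})"
    and Q_vals: "\<And>n \<omega>. n \<ge> 1 \<Longrightarrow> \<omega> \<in> space M \<Longrightarrow> Q n \<omega> \<in> {0, 1}"
    and Q_half: "\<And>n. n \<ge> 1 \<Longrightarrow> measure M {\<omega> \<in> space M. Q n \<omega> = 1} = 1/2"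
    and U_unif: "\<And>n. n \<ge> 1 \<Longrightarrow> distr M lborel (U n) = uniform_measure lborel {0..1}"
    and x: "0 < x" "x < 1"
  shows "hausdorff_dim_measure
           (distr M borel (\<lambda>\<omega>. (zeta Q U x \<omega>, zeta Q U 1 \<omega>)))
         \<ge> ereal (2 - ln (1 + x) / ln 2)"
  proof -
  have z: "zsetup M Q U x"
    using assms by (intro zsetup.intro zsetup_axioms.intro) auto
  interpret z: zsetup M Q U x by (rule z)
  show ?thesis using z.main unfolding z.ZZ_def z.s0_def by simp
qed


end
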